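(* Let $\mathbf{A}=(\mathcal{P},\mathcal{L},\parallel)$ and $\mathbf{A}'=(\mathcal{P}',\mathcal{L}',\parallel')$ be affine spaces with $\dim\mathbf{A}'\ge 3$. Suppose that $\varphi:\mathcal{L}\to\mathcal{L}'$ is an isomorphism of the Plücker space $(\mathcal{L},\sim)$ onto the Plücker space $(\mathcal{L}',\sim')$, i.e. a bijection such that for all $a,b\in\mathcal{L}$: $a\sim b \iff a^\varphi\sim' b^\varphi$. Then the mapping $$\kappa:\mathcal{P}\to\mathcal{P}',\qquad a\cap b\mapsto a^\varphi\cap b^\varphi\quad(a,b\in\mathcal{L},\ a\approx b)$$ is well defined (i.e. for adjacent lines $a,b$ the lines $a^\varphi,b^\varphi$ meet in exactly one point, and this point depends only on the point $a\cap b$, not on the choice of the adjacent lines $a,b$ through it), and $\kappa$ is a collineation.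
   Context: An affine space $\mathbf{A}=(\mathcal{P},\mathcal{L},\parallel)$ has point set $\mathcal{P}$, line set $\mathcal{L}$ (lines viewed as subsets of $\mathcal{P}$) and parallelism $\parallel$. Two lines $a,b\in\mathcal{L}$ are called related, written $a\sim b$, if $a\cap b\neq\emptyset$ (so every line is related to itself); they are adjacent, written $a\approx b$, if $a\sim b$ and $a\neq b$. The pair $(\mathcal{L},\sim)$ is called the affine Plücker space on $\mathbf{A}$; similarly $\sim'$, $\approx'$ for $\mathbf{A}'$. The image of $x$ under a map $\varphi$ is written $x^\varphi$. A collineation $\mathcal{P}\to\mathcal{P}'$ is a bijection that maps collinear triples of points to collinear triples and non-collinear triples to non-collinear triples. *)

theory Defs
  imports Main
begin

text \<open>Axioms (Lenz / Karzel--Kroll): linear space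
with at least two points per line, parallelism an equivalence relation on L,
Euclid's parallel axiom, and the triangle (Tamaschke) axiom.\<close>

definition collinear :: "'p set set \<Rightarrow> 'p \<Rightarrow> 'p \<Rightarrow> 'p \<Rightarrow> bool" where
  "collinear L x y z \<longleftrightarrow> (\<exists>l\<in>L. x \<in> l \<and> y \<in> l \<and> z \<in> l)"

definition affine_space :: "'p set \<Rightarrow> 'p set set \<Rightarrow> ('p set \<Rightarrow> 'p set \<Rightarrow> bool) \<Rightarrow> bool" where
  "affine_space P L par \<longleftrightarrow>
     (\<forall>l\<in>L. l \<subseteq> P \<and> (\<exists>x y. x \<noteq> y \<and> x \<in> l \<and> y \<in> l)) \<and>
     (\<forall>x\<in>P. \<forall>y\<in>P. x \<noteq> y \<longrightarrow> (\<exists>!l. l \<in> L \<and> x \<in> l \<and> y \<in> l)) \<and>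
     (\<forall>a b. par a b \<longrightarrow> a \<in> L \<and> b \<in> L) \<and>
     (\<forall>a\<in>L. par a a) \<and>
     (\<forall>a b. par a b \<longrightarrow> par b a) \<and>
     (\<forall>a b c. par a b \<longrightarrow> par b c \<longrightarrow> par a c) \<and>
     (\<forall>x\<in>P. \<forall>l\<in>L. \<exists>!m. m \<in> L \<and> x \<in> m \<and> par m l) \<and>
     (\<forall>a b c a' b'. a \<in> P \<and> b \<in> P \<and> c \<in> P \<and> \<not> collinear L a b c \<and>
        a' \<in> P \<and> b' \<in> P \<and> a' \<noteq> b' \<and>
        (\<forall>l\<in>L. \<forall>l'\<in>L. a \<in> l \<and> b \<in> l \<and> a' \<in> l' \<and> b' \<in> l' \<longrightarrow> par l l') \<longrightarrow>
        (\<forall>m\<in>L. \<forall>n\<in>L. a' \<in> m \<and> b' \<in> n \<and>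
            (\<exists>l\<in>L. a \<in> l \<and> c \<in> l \<and> par m l) \<and>
            (\<exists>l\<in>L. b \<in> l \<and> c \<in> l \<and> par n l) \<longrightarrow> m \<inter> n \<noteq> {}))"

definition affine_subspace :: "'p set \<Rightarrow> 'p set set \<Rightarrow> ('p set \<Rightarrow> 'p set \<Rightarrow> bool) \<Rightarrow> 'p set \<Rightarrow> bool" where
  "affine_subspace P L par S \<longleftrightarrow>
     S \<subseteq> P \<and>
     (\<forall>l\<in>L. \<forall>x\<in>S. \<forall>y\<in>S. x \<noteq> y \<and> x \<in> l \<and> y \<in> l \<longrightarrow> l \<subseteq> S) \<and>
     (\<forall>l\<in>L. \<forall>m\<in>L. \<forall>x\<in>S. l \<subseteq> S \<and> x \<in> m \<and> par m l \<longrightarrow> m \<subseteq> S)"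

definition dim_ge :: "'p set \<Rightarrow> 'p set set \<Rightarrow> ('p set \<Rightarrow> 'p set \<Rightarrow> bool) \<Rightarrow> nat \<Rightarrow> bool" where
  "dim_ge P L par n \<longleftrightarrow>
     (\<exists>S :: nat \<Rightarrow> 'p set. (\<forall>i\<le>n. affine_subspace P L par (S i)) \<and> S 0 \<noteq> {} \<and>
        (\<forall>i<n. S i \<subset> S (Suc i)))"

definition related :: "'p set \<Rightarrow> 'p set \<Rightarrow> bool" where
  "related a b \<longleftrightarrow> a \<inter> b \<noteq> {}"

definition adjacent :: "'p set \<Rightarrow> 'p set \<Rightarrow> bool" where
  "adjacent a b \<longleftrightarrow> related a b \<and> a \<noteq> b"

definition collineation ::
  "'p set \<Rightarrow> 'p set set \<Rightarrow> 'q set \<Rightarrow> 'q set set \<Rightarrow> ('p \<Rightarrow> 'q) \<Rightarrow> bool" where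
  "collineation P L P' L' f \<longleftrightarrow> bij_betw f P P' \<and>
     (\<forall>x\<in>P. \<forall>y\<in>P. \<forall>z\<in>P. collinear L x y z \<longrightarrow> collinear L' (f x) (f y) (f z)) \<and>
     (\<forall>x\<in>P. \<forall>y\<in>P. \<forall>z\<in>P. \<not> collinear L x y z \<longrightarrow> \<not> collinear L' (f x) (f y) (f z))"

end

theory Submission
  imports Defs
begin


locale aff =
  fixes P :: "'p set" and L :: "'p set set" and par :: "'p set \<Rightarrow> 'p set \<Rightarrow> bool"
  assumes ax: "affine_space P L par"
begin

lemmas axc = ax[unfolded affine_space_def]
lemmas ax1 = axc[THEN conjunct1]
lemmas ax2 = axc[THEN conjunct2, THEN conjunct1]
lemmas ax3 = axc[THEN conjunct2, THEN conjunct2, THEN conjunct1]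
lemmas ax4 = axc[THEN conjunct2, THEN conjunct2, THEN conjunct2, THEN conjunct1]
lemmas ax5 = axc[THEN conjunct2, THEN conjunct2, THEN conjunct2, THEN conjunct2, THEN conjunct1]
lemmas ax6 = axc[THEN conjunct2, THEN conjunct2, THEN conjunct2, THEN conjunct2, THEN conjunct2, THEN conjunct1]
lemmas ax7 = axc[THEN conjunct2, THEN conjunct2, THEN conjunct2, THEN conjunct2, THEN conjunct2, THEN conjunct2, THEN conjunct1]
lemmas ax8 = axc[THEN conjunct2, THEN conjunct2, THEN conjunct2, THEN conjunct2, THEN conjunct2, THEN conjunct2, THEN conjunct2]

lemma line_sub: "l \<in> L \<Longrightarrow> l \<subseteq> P"
  using ax1 by blast

lemma line_two: "l \<in> L \<Longrightarrow> \<exists>x y. x \<noteq> y \<and> x \<in> l \<and> y \<in> l"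
  using ax1 by blast

lemma line_ex: "x \<in> P \<Longrightarrow> y \<in> P \<Longrightarrow> x \<noteq> y \<Longrightarrow> \<exists>l\<in>L. x \<in> l \<and> y \<in> l"
  using ex1_implies_ex[OF ax2[rule_format, of x y]] by blast

lemma line_uniq:
  assumes h: "l \<in> L" "m \<in> L" "x \<noteq> y" "x \<in> l" "y \<in> l" "x \<in> m" "y \<in> m"
  shows "l = m"
proof -
  have "x \<in> P" "y \<in> P" using h line_sub by auto
  then have "\<exists>!l. l \<in> L \<and> x \<in> l \<and> y \<in> l" using ax2[rule_format, of x y] h(3) by simp
  then obtain k where k: "\<forall>m. m \<in> L \<and> x \<in> m \<and> y \<in> m \<longrightarrow> m = k" by (elim ex1E) blast
  have "l = k" using k[rule_format, of l] h by simp
  moreover have "m = k" using k[rule_format, of m] h by simp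
  ultimately show ?thesis by simp
qed

lemma par_L: "par a b \<Longrightarrow> a \<in> L \<and> b \<in> L"
  using ax3 by blast
lemma par_refl: "a \<in> L \<Longrightarrow> par a a"
  using ax4 by blast
lemma par_sym: "par a b \<Longrightarrow> par b a"
  using ax5 by blast
lemma par_trans: "par a b \<Longrightarrow> par b c \<Longrightarrow> par a c"
  using ax6 by blast
lemma par_ex: "x \<in> P \<Longrightarrow> l \<in> L \<Longrightarrow> \<exists>m\<in>L. x \<in> m \<and> par m l"
  using ex1_implies_ex[OF ax7[rule_format, of x l]] by blast

lemma par_uniq:
  assumes "m \<in> L" "m' \<in> L" "x \<in> m" "x \<in> m'" "par m l" "par m' l"
  shows "m = m'"
proof -
  have "x \<in> P" using assms line_sub by auto
  moreover have "l \<in> L" using assms par_L by blast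
  ultimately have "\<exists>!m. m \<in> L \<and> x \<in> m \<and> par m l" using ax7[rule_format, of x l] by simp
  then obtain k where k: "\<forall>m. m \<in> L \<and> x \<in> m \<and> par m l \<longrightarrow> m = k" by (elim ex1E) blast
  have "m = k" using k[rule_format, of m] assms by simp
  moreover have "m' = k" using k[rule_format, of m'] assms by simp
  ultimately show ?thesis by simp
qed

lemma par_meet:
  assumes "par m n" "x \<in> m" "x \<in> n" shows "m = n"
proof -
  have L: "m \<in> L" "n \<in> L" using par_L assms(1) by auto
  have "par n n" using par_refl L by simp
  thus ?thesis using par_uniq[of m n x n] L assms by simp
qed

lemma col_perm: "collinear L x y z \<Longrightarrow> collinear L y x z \<and> collinear L x z y \<and> collinear L z y x"
  unfolding collinear_def by blast

lemma noncol:
  assumes "l \<in> L" "x \<in> l" "y \<in> l" "x \<noteq> y" "z \<notin> l"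
  shows "\<not> collinear L x y z"
proof
  assume "collinear L x y z"
  then obtain m where m: "m \<in> L" "x \<in> m" "y \<in> m" "z \<in> m" unfolding collinear_def by blast
  then have "m = l" using line_uniq[of m l x y] assms by simp
  thus False using m assms by simp
qed

lemma tam:
  assumes "A \<in> P" "B \<in> P" "C \<in> P" "\<not> collinear L A B C" "A' \<in> P" "B' \<in> P" "A' \<noteq> B'"
   "g \<in> L" "A \<in> g" "B \<in> g" "g' \<in> L" "A' \<in> g'" "B' \<in> g'" "par g g'" "A \<noteq> B"
   "m \<in> L" "n \<in> L" "A' \<in> m" "B' \<in> n" "k1 \<in> L" "A \<in> k1" "C \<in> k1" "par m k1"
   "k2 \<in> L" "B \<in> k2" "C \<in> k2" "par n k2"
  shows "m \<inter> n \<noteq> {}"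
proof -
  have hyp: "\<forall>l\<in>L. \<forall>l'\<in>L. A \<in> l \<and> B \<in> l \<and> A' \<in> l' \<and> B' \<in> l' \<longrightarrow> par l l'"
  proof (intro ballI impI)
    fix l l' assume h: "l \<in> L" "l' \<in> L" "A \<in> l \<and> B \<in> l \<and> A' \<in> l' \<and> B' \<in> l'"
    have "l = g" using line_uniq[of l g A B] h assms(8,9,10,15) by blast
    moreover have "l' = g'" using line_uniq[of l' g' A' B'] h assms(7,11,12,13) by blast
    ultimately show "par l l'" using assms(14) by simp
  qed
  have dummy: True by simp
  {
  }
  have T: "\<forall>a b c a' b'. a \<in> P \<and> b \<in> P \<and> c \<in> P \<and> \<not> collinear L a b c \<and>
        a' \<in> P \<and> b' \<in> P \<and> a' \<noteq> b' \<and>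
        (\<forall>l\<in>L. \<forall>l'\<in>L. a \<in> l \<and> b \<in> l \<and> a' \<in> l' \<and> b' \<in> l' \<longrightarrow> par l l') \<longrightarrow>
        (\<forall>m\<in>L. \<forall>n\<in>L. a' \<in> m \<and> b' \<in> n \<and>
            (\<exists>l\<in>L. a \<in> l \<and> c \<in> l \<and> par m l) \<and>
            (\<exists>l\<in>L. b \<in> l \<and> c \<in> l \<and> par n l) \<longrightarrow> m \<inter> n \<noteq> {})"
    by (rule ax8)
  have e1: "\<exists>l\<in>L. A \<in> l \<and> C \<in> l \<and> par m l" using assms by blast
  have e2: "\<exists>l\<in>L. B \<in> l \<and> C \<in> l \<and> par n l" using assms by blast
  have pre: "A \<in> P \<and> B \<in> P \<and> C \<in> P \<and> \<not> collinear L A B C \<and>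
        A' \<in> P \<and> B' \<in> P \<and> A' \<noteq> B' \<and>
        (\<forall>l\<in>L. \<forall>l'\<in>L. A \<in> l \<and> B \<in> l \<and> A' \<in> l' \<and> B' \<in> l' \<longrightarrow> par l l')"
    using assms hyp by simp
  have "\<forall>m\<in>L. \<forall>n\<in>L. A' \<in> m \<and> B' \<in> n \<and>
            (\<exists>l\<in>L. A \<in> l \<and> C \<in> l \<and> par m l) \<and>
            (\<exists>l\<in>L. B \<in> l \<and> C \<in> l \<and> par n l) \<longrightarrow> m \<inter> n \<noteq> {}"
    using spec[OF spec[OF spec[OF spec[OF spec[OF T, of A], of B], of C], of A'], of B'] pre by (rule mp)
  then show ?thesis using assms(16,17,18,19) e1 e2 by blast
qed

end



context aff begin

lemma noncol_all:
  assumes "l \<in> L" "x \<in> l" "y \<in> l" "x \<noteq> y" "z \<notin> l"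
  shows "\<not> collinear L x y z \<and> \<not> collinear L x z y \<and> \<not> collinear L z x y \<and>
         \<not> collinear L y x z \<and> \<not> collinear L y z x \<and> \<not> collinear L z y x"
  using noncol[OF assms] unfolding collinear_def by blast

lemma par_disj: "par m n \<Longrightarrow> m \<noteq> n \<Longrightarrow> x \<in> m \<Longrightarrow> x \<notin> n"
  using par_meet by blast

lemma strip:
  assumes gh: "par g h" "g \<noteq> h" and l: "l \<in> L" "u \<in> g" "u \<in> l" "v \<in> h" "v \<in> l" "u' \<in> g"
    and lp: "l' \<in> L" "u' \<in> l'" "par l' l"
  shows "l' \<inter> h \<noteq> {}"
proof (cases "u' = u")
  case True
  have "par l l" using l par_refl by blast
  then have "l' = l" using par_uniq[of l' l u l] l lp True by blast
  thus ?thesis using l by blast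
next
  case False
  have gL: "g \<in> L" "h \<in> L" using gh par_L by auto
  have hg: "par h g" using gh par_sym by blast
  have vg: "v \<notin> g" using par_disj[of h g v] hg gh l by blast
  have uv: "u' \<noteq> v" using vg l by blast
  have P: "u \<in> P" "v \<in> P" "u' \<in> P" using l gL line_sub by auto
  obtain k where k: "k \<in> L" "v \<in> k" "u' \<in> k" using line_ex[of v u'] P uv by blast
  have kk: "par k k" using k par_refl by blast
  have nc: "\<not> collinear L v u' u" using noncol_all[of g u' u v] gL l False vg by blast
  show ?thesis
    by (rule tam[of v u' u u' v k k l' h l g]) (use P nc uv k kk hg l lp gL in auto)
qed

lemma Tr:
  assumes al: "par al1 al2" "al1 \<noteq> al2" and lk: "l \<in> L" "k \<in> L"
    and pts: "y1 \<in> al1" "y1 \<in> l" "y2 \<in> al2" "y2 \<in> l" "s1 \<in> al1" "s1 \<in> k" "s2 \<in> al2" "s2 \<in> k"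
    and nlk: "\<not> par l k"
  shows "l \<inter> k \<noteq> {}"
proof (cases "y1 = s1")
  case True thus ?thesis using pts by blast
next
  case False
  have aL: "al1 \<in> L" "al2 \<in> L" using al par_L by auto
  have P: "y1 \<in> P" "s1 \<in> P" "s2 \<in> P" using pts aL line_sub by auto
  obtain lam where lam: "lam \<in> L" "s1 \<in> lam" "par lam l" using par_ex[of s1 l] P lk by blast
  obtain v where v: "v \<in> lam" "v \<in> al2" using strip[of al1 al2 l y1 y2 s1 lam] al lk pts lam by blast
  have s1a2: "s1 \<notin> al2" using par_disj[of al1 al2 s1] al pts by blast
  have s12: "s1 \<noteq> s2" using s1a2 pts by blast
  have vs2: "v \<noteq> s2"
  proof
    assume "v = s2"
    then have "lam = k" using line_uniq[of lam k s1 s2] lam v lk pts s12 by blast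
    then have "par l k" using lam par_sym by blast
    thus False using nlk by blast
  qed
  have vP: "v \<in> P" using v aL line_sub by auto
  have nc: "\<not> collinear L v s2 s1" using noncol_all[of al2 v s2 s1] aL v pts vs2 s1a2 by blast
  have pp: "par al2 al1" "par l lam" "par k k" using al lam lk par_sym par_refl by auto
  show ?thesis
    by (rule tam[of v s2 s1 y1 s1 al2 al1 l k lam k]) (use nc vP P False aL pts lk lam v vs2 pp in auto)
qed

end




locale pl = aff +
  fixes a b p
  assumes aL: "a \<in> L" and bL: "b \<in> L" and ab: "a \<noteq> b" and pa: "p \<in> a" and pb: "p \<in> b"
begin

definition E where "E = {y \<in> P. \<exists>m\<in>L. y \<in> m \<and> par m a \<and> m \<inter> b \<noteq> {}}"

lemma E_P: "E \<subseteq> P" unfolding E_def by blast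

lemma E_D:
  assumes "y \<in> E" "m \<in> L" "y \<in> m" "par m a" shows "m \<inter> b \<noteq> {}"
proof -
  obtain m' where "m' \<in> L" "y \<in> m'" "par m' a" "m' \<inter> b \<noteq> {}" using assms unfolding E_def by blast
  moreover have "m = m'" using par_uniq[of m m' y a] assms calculation by blast
  ultimately show ?thesis by simp
qed

lemma E_line: "y \<in> E \<Longrightarrow> m \<in> L \<Longrightarrow> y \<in> m \<Longrightarrow> par m a \<Longrightarrow> m \<subseteq> E"
  using E_D[of y m] line_sub unfolding E_def by blast

lemma ab_npar: "\<not> par a b" using par_meet[of a b p] pa pb ab by blast
lemma ba_npar: "\<not> par b a" using ab_npar par_sym by blast

lemma b_sub: "b \<subseteq> E"
proof
  fix y assume y: "y \<in> b"
  then have yP: "y \<in> P" using bL line_sub by auto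
  then obtain m where "m \<in> L" "y \<in> m" "par m a" using par_ex aL by blast
  thus "y \<in> E" unfolding E_def using y yP by blast
qed

lemma a_sub: "a \<subseteq> E"
  unfolding E_def using aL par_refl pa pb line_sub by blast

lemma Eex: "y \<in> E \<Longrightarrow> \<exists>m s. m \<in> L \<and> y \<in> m \<and> par m a \<and> s \<in> m \<and> s \<in> b"
  unfolding E_def by blast

lemma J:
  assumes y1: "y1 \<in> E" and y2: "y2 \<in> E" and y12: "y1 \<noteq> y2" and l: "l \<in> L" "y1 \<in> l" "y2 \<in> l"
  shows "l \<subseteq> E"
proof -
  obtain m1 s1 where m1: "m1 \<in> L" "y1 \<in> m1" "par m1 a" "s1 \<in> m1" "s1 \<in> b" using Eex y1 by blast
  obtain m2 s2 where m2: "m2 \<in> L" "y2 \<in> m2" "par m2 a" "s2 \<in> m2" "s2 \<in> b" using Eex y2 by blast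
  have y1P: "y1 \<in> P" "y2 \<in> P" using y1 y2 E_P by auto
  show ?thesis
  proof (cases "par l a")
    case True
    then have "l = m1" using par_uniq[of l m1 y1 a] l m1 by blast
    thus ?thesis using E_line[of y1 m1] y1 m1 by blast
  next
    case na: False
    show ?thesis
    proof (cases "par l b")
      case True
      show ?thesis
      proof (cases "y1 \<in> b")
        case True
        then have "l = b" using par_uniq[of l b y1 b] l \<open>par l b\<close> bL par_refl by blast
        thus ?thesis using b_sub by simp
      next
        case False
        have lb: "l \<noteq> b" using False l by blast
        show ?thesis
        proof
          fix z assume z: "z \<in> l"
          then have zP: "z \<in> P" using l line_sub by auto
          obtain mz where mz: "mz \<in> L" "z \<in> mz" "par mz a" using par_ex[of z a] zP aL by blast
          have "par mz m1" using mz m1 par_sym par_trans by blast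
          then have "mz \<inter> b \<noteq> {}"
            using strip[of l b m1 y1 s1 z mz] True lb m1 l z mz by blast
          thus "z \<in> E" unfolding E_def using zP mz by blast
        qed
      qed
    next
      case nb: False
      have "l \<inter> b \<noteq> {}"
      proof (cases "y1 \<in> b")
        case True thus ?thesis using l by blast
      next
        case False
        have "m1 \<noteq> m2"
        proof
          assume "m1 = m2"
          then have "l = m1" using line_uniq[of l m1 y1 y2] l m1 m2 y12 by blast
          thus False using na m1 by simp
        qed
        moreover have "par m1 m2" using m1 m2 par_sym par_trans by blast
        ultimately show ?thesis using Tr[of m1 m2 l b y1 y2 s1 s2] m1 m2 l bL nb by blast
      qed
      then obtain t where t: "t \<in> l" "t \<in> b" by blast
      obtain y where y: "y \<in> E" "y \<in> l" "y \<noteq> t" using y1 y2 y12 l by blast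
      have yb: "y \<notin> b"
      proof
        assume "y \<in> b"
        then have "l = b" using line_uniq[of l b y t] l y t bL by blast
        thus False using nb bL par_refl by blast
      qed
      obtain my s where my: "my \<in> L" "y \<in> my" "par my a" "s \<in> my" "s \<in> b" using Eex y by blast
      have st: "s \<noteq> t"
      proof
        assume "s = t"
        then have "my = l" using line_uniq[of my l y t] my l y t by blast
        thus False using na my by simp
      qed
      have yP: "y \<in> P" "s \<in> P" "t \<in> P" using y E_P my t bL line_sub by auto
      have nc: "\<not> collinear L y t s" using noncol_all[of b t s y] bL t my st yb by blast
      show ?thesis
      proof
        fix z assume z: "z \<in> l"
        show "z \<in> E"
        proof (cases "z = t")
          case True thus ?thesis using t b_sub by blast
        next
          case False
          have zP: "z \<in> P" using l z line_sub by auto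
          obtain mz where mz: "mz \<in> L" "z \<in> mz" "par mz a" using par_ex[of z a] zP aL by blast
          have "par mz my" using mz my par_sym par_trans by blast
          moreover have "par l l" "par b b" using l bL par_refl by auto
          ultimately have "mz \<inter> b \<noteq> {}"
            by (intro tam[of y t s z t l l mz b my b]) (use nc yP zP False l z t y mz my bL in auto)
          thus "z \<in> E" unfolding E_def using zP mz by blast
        qed
      qed
    qed
  qed
qed

end



context aff begin

lemma sub_P: "affine_subspace P L par S \<Longrightarrow> S \<subseteq> P"
  unfolding affine_subspace_def by (elim conjE) assumption
lemma sub_join:
  assumes "affine_subspace P L par S" "l \<in> L" "x \<in> S" "y \<in> S" "x \<noteq> y" "x \<in> l" "y \<in> l"
  shows "l \<subseteq> S"
proof -
  have "\<forall>l\<in>L. \<forall>x\<in>S. \<forall>y\<in>S. x \<noteq> y \<and> x \<in> l \<and> y \<in> l \<longrightarrow> l \<subseteq> S"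
    using assms(1) unfolding affine_subspace_def by (elim conjE) assumption
  from this[rule_format, OF assms(2,3,4)] show ?thesis using assms(5,6,7) by simp
qed
lemma sub_par:
  assumes "affine_subspace P L par S" "l \<in> L" "m \<in> L" "x \<in> S" "l \<subseteq> S" "x \<in> m" "par m l"
  shows "m \<subseteq> S"
proof -
  have "\<forall>l\<in>L. \<forall>m\<in>L. \<forall>x\<in>S. l \<subseteq> S \<and> x \<in> m \<and> par m l \<longrightarrow> m \<subseteq> S"
    using assms(1) unfolding affine_subspace_def by (elim conjE) assumption
  from this[rule_format, OF assms(2,3,4)] show ?thesis using assms(5,6,7) by simp
qed

end

context pl begin

lemma M1:
  assumes full: "P \<subseteq> E" and l: "l \<in> L" "\<not> par l a" "\<not> par l b"
  shows "l \<inter> b \<noteq> {}"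
proof -
  obtain y1 y2 where y: "y1 \<noteq> y2" "y1 \<in> l" "y2 \<in> l" using line_two l by blast
  have yE: "y1 \<in> E" "y2 \<in> E" using y l line_sub full by auto
  obtain m1 s1 where m1: "m1 \<in> L" "y1 \<in> m1" "par m1 a" "s1 \<in> m1" "s1 \<in> b" using Eex yE by blast
  obtain m2 s2 where m2: "m2 \<in> L" "y2 \<in> m2" "par m2 a" "s2 \<in> m2" "s2 \<in> b" using Eex yE by blast
  have "m1 \<noteq> m2"
  proof
    assume "m1 = m2"
    then have "l = m1" using line_uniq[of l m1 y1 y2] l m1 m2 y by blast
    thus False using l m1 by simp
  qed
  moreover have "par m1 m2" using par_trans[OF m1(3) par_sym[OF m2(3)]] .
  ultimately show ?thesis using Tr[of m1 m2 l b y1 y2 s1 s2] m1 m2 l bL y by blast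
qed

lemma M2:
  assumes full: "P \<subseteq> E" and l: "l \<in> L" "\<not> par l a" and m: "m \<in> L" "y \<in> m" "par m a"
  shows "m \<inter> l \<noteq> {}"
proof -
  have yE: "y \<in> E" using m line_sub full by auto
  obtain s where s: "s \<in> m" "s \<in> b" using E_D[OF yE m] by blast
  show ?thesis
  proof (cases "par l b")
    case True
    show ?thesis
    proof (cases "l = b")
      case True thus ?thesis using s by blast
    next
      case False
      obtain u where u: "u \<in> l" using line_two l by blast
      have uE: "u \<in> E" using u l line_sub full by auto
      obtain mu su where mu: "mu \<in> L" "u \<in> mu" "par mu a" "su \<in> mu" "su \<in> b" using Eex uE by blast
      have pbl: "par b l" using True par_sym by blast
      have "par m mu" using par_trans[OF m(3) par_sym[OF mu(3)]] .
      then have "m \<inter> l \<noteq> {}" using strip[of b l mu su u s m] pbl False mu u s m by blast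
      thus ?thesis .
    qed
  next
    case nb: False
    obtain t where t: "t \<in> l" "t \<in> b" using M1[OF full l nb] by blast
    show ?thesis
    proof (cases "s = t")
      case True thus ?thesis using s t by blast
    next
      case st: False
      obtain y1 where y1: "y1 \<in> l" "y1 \<noteq> t" using line_two[OF l(1)] by metis
      have tP: "t \<in> P" "y1 \<in> P" "s \<in> P" using t y1 l bL s m line_sub by auto
      have y1b: "y1 \<notin> b"
      proof
        assume "y1 \<in> b"
        then have "l = b" using line_uniq[of l b y1 t] l y1 t bL by blast
        thus False using nb bL par_refl by blast
      qed
      obtain mt where mt: "mt \<in> L" "t \<in> mt" "par mt a" using par_ex[of t a] tP aL by blast
      obtain be where be: "be \<in> L" "y1 \<in> be" "par be b" using par_ex[of y1 b] tP bL by blast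
      obtain m1 s1 where m1: "m1 \<in> L" "y1 \<in> m1" "par m1 a" "s1 \<in> m1" "s1 \<in> b"
        using Eex[of y1] full tP by blast
      have pbb: "par b be" using be par_sym by blast
      have bbe: "b \<noteq> be" using y1b be by blast
      have pmt: "par mt m1" using par_trans[OF mt(3) par_sym[OF m1(3)]] .
      obtain B where B: "B \<in> mt" "B \<in> be" using strip[of b be m1 s1 y1 t mt] pbb bbe m1 be t mt pmt by blast
      have tbe: "t \<notin> be" using par_disj[of b be t] pbb bbe t by blast
      have Bt: "B \<noteq> t" using B tbe by blast
      have y1mt: "y1 \<notin> mt"
      proof
        assume "y1 \<in> mt"
        then have "mt = l" using line_uniq[of mt l y1 t] mt l y1 t by blast
        thus False using mt l by simp
      qed
      have BP: "B \<in> P" using B mt line_sub by auto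
      have nc: "\<not> collinear L y1 B t" using noncol_all[of mt B t y1] mt B Bt y1mt by blast
      have y1B: "y1 \<noteq> B" using y1mt B by blast
      have pp: "par l l" "par m mt" using par_refl[OF l(1)] par_trans[OF m(3) par_sym[OF mt(3)]] by auto
      have "l \<inter> m \<noteq> {}"
        by (rule tam[of y1 B t t s be b l m l mt])
           (use nc tP BP st be B t s bL y1 y1B l m mt pp in auto)
      thus ?thesis by blast
    qed
  qed
qed

lemma PP:
  assumes full: "P \<subseteq> E" and gh: "g \<in> L" "h \<in> L" "\<not> par g h"
  shows "g \<inter> h \<noteq> {}"
proof (cases "par g a")
  case True
  have "\<not> par h a" using par_trans[OF True par_sym[of h a]] gh by blast
  moreover obtain y where "y \<in> g" using line_two gh by blast
  ultimately show ?thesis using M2[OF full, of h g y] gh True by blast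
next
  case ga: False
  show ?thesis
  proof (cases "par h a")
    case True
    obtain y where "y \<in> h" using line_two gh by blast
    then show ?thesis using M2[OF full, of g h y] gh True ga by blast
  next
    case ha: False
    obtain y1 y2 where y: "y1 \<noteq> y2" "y1 \<in> g" "y2 \<in> g" using line_two gh by blast
    have yP: "y1 \<in> P" "y2 \<in> P" using y gh line_sub by auto
    obtain m1 where m1: "m1 \<in> L" "y1 \<in> m1" "par m1 a" using par_ex yP aL by blast
    obtain m2 where m2: "m2 \<in> L" "y2 \<in> m2" "par m2 a" using par_ex yP aL by blast
    have "m1 \<noteq> m2"
    proof
      assume "m1 = m2"
      then have "g = m1" using line_uniq[of g m1 y1 y2] gh m1 m2 y by blast
      thus False using ga m1 by simp
    qed
    moreover have "par m1 m2" using par_trans[OF m1(3) par_sym[OF m2(3)]] .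
    moreover obtain w1 where w1: "w1 \<in> m1" "w1 \<in> h" using M2[OF full, of h m1 y1] gh ha m1 by blast
    moreover obtain w2 where w2: "w2 \<in> m2" "w2 \<in> h" using M2[OF full, of h m2 y2] gh ha m2 by blast
    ultimately show ?thesis using Tr[of m1 m2 g h y1 y2 w1 w2] gh y m1 m2 by blast
  qed
qed

lemma full_nodim:
  assumes full: "P \<subseteq> E" shows "\<not> dim_ge P L par 3"
proof
  assume "dim_ge P L par 3"
  then obtain S where S: "\<forall>i\<le>3. affine_subspace P L par (S i)" "S 0 \<noteq> {}"
      "\<forall>i<3. S i \<subset> S (Suc i)" unfolding dim_ge_def by blast
  have sub: "affine_subspace P L par (S 0)" "affine_subspace P L par (S 1)"
     "affine_subspace P L par (S 2)" "affine_subspace P L par (S 3)" using S(1) by auto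
  have c01: "S 0 \<subset> S 1" using S(3)[rule_format, of 0] by simp
  have c12: "S 1 \<subset> S 2" using S(3)[rule_format, of 1] by (simp add: numeral_2_eq_2)
  have c23: "S 2 \<subset> S 3" using S(3)[rule_format, of 2] by (simp add: numeral_3_eq_3 numeral_2_eq_2)
  obtain x0 where x0: "x0 \<in> S 0" using S(2) by blast
  obtain x1 where x1: "x1 \<in> S 1" "x1 \<notin> S 0" using c01 by blast
  obtain x2 where x2: "x2 \<in> S 2" "x2 \<notin> S 1" using c12 by blast
  obtain x3 where x3: "x3 \<in> S 3" "x3 \<notin> S 2" using c23 by blast
  have x0': "x0 \<in> S 1" "x0 \<in> S 2" using x0 c01 c12 by auto
  have x1': "x1 \<in> S 2" using x1 c12 by auto
  have Ps: "S 3 \<subseteq> P" "S 2 \<subseteq> P" using sub sub_P by auto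
  have xP: "x0 \<in> P" "x1 \<in> P" "x2 \<in> P" "x3 \<in> P" using x0' x1' x2 x3 Ps by auto
  have x01: "x0 \<noteq> x1" using x0 x1 by blast
  have x02: "x0 \<noteq> x2" using x0' x2 by blast
  obtain l1 where l1: "l1 \<in> L" "x0 \<in> l1" "x1 \<in> l1" using line_ex[of x0 x1] xP x01 by blast
  obtain g where g: "g \<in> L" "x0 \<in> g" "x2 \<in> g" using line_ex[of x0 x2] xP x02 by blast
  have l1S: "l1 \<subseteq> S 1" using sub_join[OF sub(2) l1(1) x0'(1) x1(1) x01 l1(2,3)] .
  have l1S2: "l1 \<subseteq> S 2" using l1S c12 by blast
  have gS: "g \<subseteq> S 2" using sub_join[OF sub(3) g(1) x0'(2) x2(1) x02 g(2,3)] .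
  obtain n where n: "n \<in> L" "x3 \<in> n" "par n l1" using par_ex[of x3 l1] xP l1 by blast
  have "\<not> par n g"
  proof
    assume "par n g"
    then have "par l1 g" using par_trans[OF par_sym[OF n(3)]] by blast
    then have "l1 = g" using par_meet l1 g by blast
    thus False using g x2 l1S by blast
  qed
  then obtain w where w: "w \<in> n" "w \<in> g" using PP[OF full n(1) g(1)] by blast
  have "w \<in> S 2" using w gS by blast
  then have "n \<subseteq> S 2" using sub_par[OF sub(3) l1(1) n(1) _ l1S2 w(1) n(3)] by blast
  thus False using n x3 by blast
qed

lemma c_sub:
  assumes c: "c \<in> L" "p \<notin> c" "a \<inter> c \<noteq> {}" "b \<inter> c \<noteq> {}"
  shows "c \<subseteq> E"
proof -
  obtain q r where q: "q \<in> a" "q \<in> c" and r: "r \<in> b" "r \<in> c" using c by blast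
  have "q \<noteq> r"
  proof
    assume "q = r"
    then have "q = p" using line_uniq[of a b q p] aL bL q r pa pb ab by blast
    thus False using q c by simp
  qed
  thus ?thesis using J[of q r c] q r a_sub b_sub c by blast
qed

lemma d_sub:
  assumes c: "c \<in> L" "p \<notin> c" "a \<inter> c \<noteq> {}" "b \<inter> c \<noteq> {}"
    and d: "d \<in> L" "d \<inter> a \<noteq> {}" "d \<inter> b \<noteq> {}" "d \<inter> c \<noteq> {}"
  shows "d \<subseteq> E"
proof -
  obtain qa qb qc where q: "qa \<in> d" "qa \<in> a" "qb \<in> d" "qb \<in> b" "qc \<in> d" "qc \<in> c" using d by blast
  have cE: "c \<subseteq> E" using c_sub c by blast
  show ?thesis
  proof (cases "qa = qb")
    case False
    thus ?thesis using J[of qa qb d] q a_sub b_sub d by blast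
  next
    case True
    then have "qa = p" using line_uniq[of a b qa p] aL bL q pa pb ab by blast
    moreover have "qc \<noteq> p" using q c by blast
    ultimately show ?thesis using J[of p qc d] q a_sub pa cE d by blast
  qed
qed

end

context aff begin

lemma tri:
  assumes dim: "dim_ge P L par 3" and hab: "a \<in> L" "b \<in> L" "a \<noteq> b" "p \<in> a" "p \<in> b"
    and c: "c \<in> L" "p \<notin> c" "a \<inter> c \<noteq> {}" "b \<inter> c \<noteq> {}"
  shows "\<exists>l\<in>L. \<forall>d\<in>L. d \<inter> a \<noteq> {} \<and> d \<inter> b \<noteq> {} \<and> d \<inter> c \<noteq> {} \<longrightarrow> l \<inter> d = {}"
proof -
  have "pl P L par a b p" unfolding pl_def pl_axioms_def aff_def using ax hab by blast
  then interpret pl P L par a b p .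
  have "\<not> P \<subseteq> E" using full_nodim dim by blast
  then obtain z where z: "z \<in> P" "z \<notin> E" by blast
  obtain l where l: "l \<in> L" "z \<in> l" "par l a" using par_ex[of z a] z hab by blast
  have "\<forall>d\<in>L. d \<inter> a \<noteq> {} \<and> d \<inter> b \<noteq> {} \<and> d \<inter> c \<noteq> {} \<longrightarrow> l \<inter> d = {}"
  proof (intro ballI impI)
    fix d assume d: "d \<in> L" "d \<inter> a \<noteq> {} \<and> d \<inter> b \<noteq> {} \<and> d \<inter> c \<noteq> {}"
    show "l \<inter> d = {}"
    proof (rule ccontr)
      assume "l \<inter> d \<noteq> {}"
      then obtain w where w: "w \<in> l" "w \<in> d" by blast
      have "d \<subseteq> E" using d(2) by (intro d_sub[OF c(1) c(2) c(3) c(4) d(1)]) auto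
      then have "w \<in> E" using w by blast
      then have "l \<subseteq> E" by (rule E_line[OF _ l(1) w(1) l(3)])
      thus False using z(2) l(2) by blast
    qed
  qed
  thus ?thesis using l by blast
qed

end



definition clq :: "'p set set \<Rightarrow> 'p set set \<Rightarrow> bool" where
  "clq L K \<longleftrightarrow> K \<subseteq> L \<and> (\<forall>a\<in>K. \<forall>b\<in>K. related a b) \<and> (\<forall>m\<in>L. (\<forall>a\<in>K. related m a) \<longrightarrow> m \<in> K)"
definition cov :: "'p set set \<Rightarrow> 'p set set \<Rightarrow> bool" where
  "cov L K \<longleftrightarrow> (\<forall>m\<in>L. \<exists>a\<in>K. related m a)"
definition star :: "'p set set \<Rightarrow> 'p \<Rightarrow> 'p set set" where
  "star L x = {l\<in>L. x \<in> l}"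

lemma transfer:
  assumes bij: "bij_betw \<phi> L L'" and iso: "\<forall>a\<in>L. \<forall>b\<in>L. related a b \<longleftrightarrow> related (\<phi> a) (\<phi> b)"
    and K: "clq L K" "cov L K"
  shows "clq L' (\<phi> ` K) \<and> cov L' (\<phi> ` K)"
proof -
  have KL: "K \<subseteq> L" and Kc: "\<And>a b. a \<in> K \<Longrightarrow> b \<in> K \<Longrightarrow> related a b"
    and Km: "\<And>m. m \<in> L \<Longrightarrow> \<forall>a\<in>K. related m a \<Longrightarrow> m \<in> K"
    using K(1) unfolding clq_def by auto
  have Kv: "\<And>m. m \<in> L \<Longrightarrow> \<exists>a\<in>K. related m a" using K(2) unfolding cov_def by auto
  have isoI: "\<And>a b. a \<in> L \<Longrightarrow> b \<in> L \<Longrightarrow> related a b = related (\<phi> a) (\<phi> b)"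
    using iso by auto
  have img: "\<phi> ` L = L'" using bij unfolding bij_betw_def by auto
  have c1: "\<phi> ` K \<subseteq> L'" using KL img by auto
  have c2: "\<forall>a\<in>\<phi> ` K. \<forall>b\<in>\<phi> ` K. related a b"
  proof (intro ballI)
    fix a' b' assume "a' \<in> \<phi> ` K" "b' \<in> \<phi> ` K"
    then obtain a b where ab: "a \<in> K" "b \<in> K" "a' = \<phi> a" "b' = \<phi> b" by auto
    have "related a b" using Kc ab by auto
    moreover have "a \<in> L" "b \<in> L" using ab KL by auto
    ultimately have "related (\<phi> a) (\<phi> b)" using isoI by auto
    thus "related a' b'" using ab by simp
  qed
  have c3: "\<forall>m\<in>L'. (\<forall>a\<in>\<phi> ` K. related m a) \<longrightarrow> m \<in> \<phi> ` K"
  proof (intro ballI impI)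
    fix m' assume m': "m' \<in> L'" "\<forall>a\<in>\<phi> ` K. related m' a"
    then obtain m where m: "m \<in> L" "m' = \<phi> m" using img by auto
    have "\<forall>a\<in>K. related m a"
    proof
      fix a assume a: "a \<in> K"
      then have "related (\<phi> m) (\<phi> a)" using m' m by auto
      moreover have "a \<in> L" using a KL by auto
      ultimately show "related m a" using isoI m by auto
    qed
    then have "m \<in> K" using Km m by auto
    thus "m' \<in> \<phi> ` K" using m by auto
  qed
  have c4: "cov L' (\<phi> ` K)" unfolding cov_def
  proof
    fix m' assume "m' \<in> L'"
    then obtain m where m: "m \<in> L" "m' = \<phi> m" using img by auto
    then obtain a where a: "a \<in> K" "related m a" using Kv by auto
    have "a \<in> L" using a KL by auto
    then have "related m' (\<phi> a)" using a m isoI by auto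
    thus "\<exists>a\<in>\<phi> ` K. related m' a" using a by auto
  qed
  have "clq L' (\<phi> ` K)" unfolding clq_def using c1 c2 c3 by simp
  thus ?thesis using c4 by simp
qed

context aff begin

lemma star_clq: assumes "x \<in> P" shows "clq L (star L x) \<and> cov L (star L x)"
proof -
  have 1: "star L x \<subseteq> L" unfolding star_def by blast
  have 2: "\<forall>a\<in>star L x. \<forall>b\<in>star L x. related a b" unfolding star_def related_def by blast
  have 3: "\<forall>m\<in>L. (\<forall>a\<in>star L x. related m a) \<longrightarrow> m \<in> star L x"
  proof (intro ballI impI)
    fix m assume m: "m \<in> L" "\<forall>a\<in>star L x. related m a"
    show "m \<in> star L x"
    proof (rule ccontr)
      assume nx: "m \<notin> star L x"
      obtain m0 where m0: "m0 \<in> L" "x \<in> m0" "par m0 m" using par_ex[OF assms m(1)] by blast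
      have "m0 \<in> star L x" using m0 unfolding star_def by blast
      then have "related m m0" using m by blast
      then obtain y where "y \<in> m" "y \<in> m0" unfolding related_def by blast
      then have "m0 = m" using par_meet[OF m0(3)] by blast
      thus False using nx m0 m unfolding star_def by blast
    qed
  qed
  have 4: "cov L (star L x)" unfolding cov_def
  proof
    fix l assume l: "l \<in> L"
    show "\<exists>a\<in>star L x. related l a"
    proof (cases "x \<in> l")
      case True
      obtain u where "u \<in> l" using line_two l by blast
      then have "related l l" unfolding related_def by auto
      moreover have "l \<in> star L x" using True l unfolding star_def by auto
      ultimately show ?thesis by auto
    next
      case False
      obtain u where u: "u \<in> l" using line_two l by blast
      have "u \<in> P" "x \<noteq> u" using u l line_sub False by auto
      then obtain k where k: "k \<in> L" "x \<in> k" "u \<in> k" using line_ex[OF assms] by blast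
      then have "related l k" using u unfolding related_def by auto
      moreover have "k \<in> star L x" using k unfolding star_def by auto
      ultimately show ?thesis by auto
    qed
  qed
  have "clq L (star L x)" unfolding clq_def using 1 2 3 by simp
  thus ?thesis using 4 by simp
qed

lemma dim_pts:
  assumes dim: "dim_ge P L par 3"
  shows "\<exists>x0 x1. x0 \<in> P \<and> x1 \<in> P \<and> x0 \<noteq> x1" and "l \<in> L \<Longrightarrow> \<exists>z\<in>P. z \<notin> l"
proof -
  obtain S where S: "\<forall>i\<le>3. affine_subspace P L par (S i)" "S 0 \<noteq> {}"
      "\<forall>i<3. S i \<subset> S (Suc i)" using dim unfolding dim_ge_def by blast
  have sub: "affine_subspace P L par (S 1)" "affine_subspace P L par (S 2)" using S(1) by auto
  have c01: "S 0 \<subset> S 1" using S(3)[rule_format, of 0] by simp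
  have c12: "S 1 \<subset> S 2" using S(3)[rule_format, of 1] by (simp add: numeral_2_eq_2)
  obtain x0 where x0: "x0 \<in> S 0" using S(2) by blast
  obtain x1 where x1: "x1 \<in> S 1" "x1 \<notin> S 0" using c01 by blast
  have x0': "x0 \<in> S 1" using x0 c01 by blast
  have S2P: "S 2 \<subseteq> P" using sub_P[OF sub(2)] .
  have xP: "x0 \<in> P" "x1 \<in> P" using x0' x1 c12 S2P by auto
  have x01: "x0 \<noteq> x1" using x0 x1 by blast
  show "\<exists>x0 x1. x0 \<in> P \<and> x1 \<in> P \<and> x0 \<noteq> x1" using xP x01 by blast
  assume l: "l \<in> L"
  show "\<exists>z\<in>P. z \<notin> l"
  proof (rule ccontr)
    assume "\<not> (\<exists>z\<in>P. z \<notin> l)"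
    then have Pl: "P \<subseteq> l" by blast
    have "l \<subseteq> S 1" using sub_join[OF sub(1) l x0' x1(1) x01] Pl xP by blast
    then have "S 2 \<subseteq> S 1" using S2P Pl by blast
    thus False using c12 by blast
  qed
qed

lemma two_lines:
  assumes dim: "dim_ge P L par 3" and x: "x \<in> P"
  shows "\<exists>l1 l2. l1 \<in> L \<and> l2 \<in> L \<and> l1 \<noteq> l2 \<and> x \<in> l1 \<and> x \<in> l2"
proof -
  obtain x0 x1 where xs: "x0 \<in> P" "x1 \<in> P" "x0 \<noteq> x1" using dim_pts(1)[OF dim] by blast
  obtain y where y: "y \<in> P" "y \<noteq> x" using xs by metis
  obtain l1 where l1: "l1 \<in> L" "x \<in> l1" "y \<in> l1" using line_ex[OF x y(1)] y by metis
  obtain z where z: "z \<in> P" "z \<notin> l1" using dim_pts(2)[OF dim l1(1)] by blast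
  have "x \<noteq> z" using z l1 by blast
  then obtain l2 where l2: "l2 \<in> L" "x \<in> l2" "z \<in> l2" using line_ex[OF x z(1)] by blast
  have "l1 \<noteq> l2" using l2 z by blast
  thus ?thesis using l1 l2 by blast
qed

lemma star_char:
  assumes dim: "dim_ge P L par 3" and K: "clq L K" "cov L K"
  shows "\<exists>x\<in>P. K = star L x"
proof -
  have KL: "K \<subseteq> L" and Kc: "\<forall>a\<in>K. \<forall>b\<in>K. related a b"
    and Km: "\<forall>m\<in>L. (\<forall>a\<in>K. related m a) \<longrightarrow> m \<in> K" using K unfolding clq_def by blast+
  obtain x0 x1 where xs: "x0 \<in> P" "x1 \<in> P" "x0 \<noteq> x1" using dim_pts(1)[OF dim] by blast
  obtain l0 where l0: "l0 \<in> L" using line_ex[OF xs] by blast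
  obtain a where a: "a \<in> K" using K(2) l0 unfolding cov_def by blast
  have aL: "a \<in> L" using a KL by blast
  obtain p where p: "p \<in> a" using line_two[OF aL] by blast
  have pP: "p \<in> P" using p aL line_sub by blast
  obtain l1 l2 where l12: "l1 \<in> L" "l2 \<in> L" "l1 \<noteq> l2" "p \<in> l1" "p \<in> l2"
    using two_lines[OF dim pP] by blast
  obtain a2 where a2: "a2 \<in> L" "a2 \<noteq> a" "p \<in> a2" using l12 by metis
  obtain b where b: "b \<in> K" "b \<noteq> a"
  proof (rule ccontr)
    assume "\<not> thesis"
    then have "\<forall>c\<in>K. c = a" using that by blast
    then have "\<forall>c\<in>K. related a2 c" using p a2 unfolding related_def by blast
    then have "a2 \<in> K" using Km a2 by blast
    thus False using \<open>\<forall>c\<in>K. c = a\<close> a2 by blast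
  qed
  have bL: "b \<in> L" using b KL by blast
  obtain q where q: "q \<in> a" "q \<in> b" using Kc a b unfolding related_def by blast
  have qP: "q \<in> P" using q aL line_sub by blast
  show ?thesis
  proof (cases "\<forall>c\<in>K. q \<in> c")
    case True
    have "K = star L q"
    proof
      show "K \<subseteq> star L q" using True KL unfolding star_def by blast
      show "star L q \<subseteq> K"
      proof
        fix m assume "m \<in> star L q"
        then have m: "m \<in> L" "q \<in> m" unfolding star_def by auto
        have "\<forall>c\<in>K. related m c" using True m unfolding related_def by blast
        thus "m \<in> K" using Km m by blast
      qed
    qed
    thus ?thesis using qP by blast
  next
    case False
    then obtain c where c: "c \<in> K" "q \<notin> c" by blast
    have cL: "c \<in> L" using c KL by blast
    have "a \<inter> c \<noteq> {}" "b \<inter> c \<noteq> {}" using Kc a b c unfolding related_def by blast+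
    then obtain l where l: "l \<in> L" "\<forall>d\<in>L. d \<inter> a \<noteq> {} \<and> d \<inter> b \<noteq> {} \<and> d \<inter> c \<noteq> {} \<longrightarrow> l \<inter> d = {}"
      using tri[OF dim aL bL b(2)[symmetric] q cL c(2)] by blast
    obtain d where d: "d \<in> K" "related l d" using K(2) l(1) unfolding cov_def by blast
    have "d \<inter> a \<noteq> {}" "d \<inter> b \<noteq> {}" "d \<inter> c \<noteq> {}" using Kc d a b c unfolding related_def by blast+
    moreover have "d \<in> L" using d KL by blast
    ultimately have "l \<inter> d = {}" using l by blast
    thus ?thesis using d unfolding related_def by blast
  qed
qed

end




theorem theorem1:
  fixes P :: "'p set" and L :: "'p set set" and par :: "'p set \<Rightarrow> 'p set \<Rightarrow> bool"
    and P' :: "'q set" and L' :: "'q set set" and par' :: "'q set \<Rightarrow> 'q set \<Rightarrow> bool"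
    and \<phi> :: "'p set \<Rightarrow> 'q set"
  assumes A: "affine_space P L par"
    and A': "affine_space P' L' par'"
    and dim: "dim_ge P' L' par' 3"
    and bij: "bij_betw \<phi> L L'"
    and iso: "\<forall>a\<in>L. \<forall>b\<in>L. related a b \<longleftrightarrow> related (\<phi> a) (\<phi> b)"
  shows "(\<forall>a\<in>L. \<forall>b\<in>L. adjacent a b \<longrightarrow> (\<exists>x. \<phi> a \<inter> \<phi> b = {x})) \<and>
         (\<forall>a\<in>L. \<forall>b\<in>L. \<forall>c\<in>L. \<forall>d\<in>L. adjacent a b \<longrightarrow> adjacent c d \<longrightarrow>
             a \<inter> b = c \<inter> d \<longrightarrow> \<phi> a \<inter> \<phi> b = \<phi> c \<inter> \<phi> d) \<and>
         (\<exists>\<kappa> :: 'p \<Rightarrow> 'q.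
             (\<forall>a\<in>L. \<forall>b\<in>L. \<forall>x. adjacent a b \<longrightarrow> a \<inter> b = {x} \<longrightarrow> \<phi> a \<inter> \<phi> b = {\<kappa> x}) \<and>
             collineation P L P' L' \<kappa>)"
proof -
  interpret X: aff P L par using A by (rule aff.intro)
  interpret Y: aff P' L' par' using A' by (rule aff.intro)
  have inj: "inj_on \<phi> L" and img: "\<phi> ` L = L'" using bij unfolding bij_betw_def by auto
  have isoI: "\<And>a b. a \<in> L \<Longrightarrow> b \<in> L \<Longrightarrow> related a b = related (\<phi> a) (\<phi> b)"
    using iso by auto
  have ex: "\<exists>x'. x' \<in> P' \<and> \<phi> ` star L x = star L' x'" if x: "x \<in> P" for x
  proof -
    have "clq L (star L x) \<and> cov L (star L x)" using X.star_clq[OF x] .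
    then have "clq L' (\<phi> ` star L x) \<and> cov L' (\<phi> ` star L x)"
      using transfer[OF bij iso] by blast
    then show ?thesis using Y.star_char[OF dim] by blast
  qed
  define \<kappa> where "\<kappa> = (\<lambda>x. SOME x'. x' \<in> P' \<and> \<phi> ` star L x = star L' x')"
  have kap: "\<kappa> x \<in> P' \<and> \<phi> ` star L x = star L' (\<kappa> x)" if x: "x \<in> P" for x
    unfolding \<kappa>_def using someI_ex[OF ex[OF x]] .
  have kin: "\<kappa> x \<in> \<phi> l" if "x \<in> P" "l \<in> L" "x \<in> l" for x l
  proof -
    have "l \<in> star L x" using that unfolding star_def by auto
    then have "\<phi> l \<in> star L' (\<kappa> x)" using kap[OF that(1)] by blast
    thus ?thesis unfolding star_def by auto
  qed
  have key: "\<phi> a \<inter> \<phi> b = {\<kappa> x}" if ab: "a \<in> L" "b \<in> L" "a \<noteq> b" "x \<in> a" "x \<in> b" for a b x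
  proof -
    have xP: "x \<in> P" using ab X.line_sub by auto
    have k: "\<kappa> x \<in> \<phi> a" "\<kappa> x \<in> \<phi> b" using kin[OF xP] ab by auto
    have ne: "\<phi> a \<noteq> \<phi> b" using inj ab unfolding inj_on_def by auto
    have L': "\<phi> a \<in> L'" "\<phi> b \<in> L'" using img ab by auto
    have "y = \<kappa> x" if y: "y \<in> \<phi> a" "y \<in> \<phi> b" for y
    proof (rule ccontr)
      assume "y \<noteq> \<kappa> x"
      then have "\<phi> a = \<phi> b" using Y.line_uniq[OF L' _ y(1) k(1) y(2) k(2)] by blast
      thus False using ne by simp
    qed
    thus ?thesis using k by blast
  qed
  have P1: "\<forall>a\<in>L. \<forall>b\<in>L. adjacent a b \<longrightarrow> (\<exists>x. \<phi> a \<inter> \<phi> b = {x})"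
  proof (intro ballI impI)
    fix a b assume ab: "a \<in> L" "b \<in> L" "adjacent a b"
    then obtain x where "x \<in> a" "x \<in> b" "a \<noteq> b" unfolding adjacent_def related_def by blast
    thus "\<exists>x. \<phi> a \<inter> \<phi> b = {x}" using key[OF ab(1,2)] by blast
  qed
  have P2: "\<forall>a\<in>L. \<forall>b\<in>L. \<forall>c\<in>L. \<forall>d\<in>L. adjacent a b \<longrightarrow> adjacent c d \<longrightarrow>
             a \<inter> b = c \<inter> d \<longrightarrow> \<phi> a \<inter> \<phi> b = \<phi> c \<inter> \<phi> d"
  proof (intro ballI impI)
    fix a b c d assume h: "a \<in> L" "b \<in> L" "c \<in> L" "d \<in> L" "adjacent a b" "adjacent c d" "a \<inter> b = c \<inter> d"
    then obtain x where x: "x \<in> a" "x \<in> b" unfolding adjacent_def related_def by blast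
    have x2: "x \<in> c" "x \<in> d" using x h(7) by blast+
    have "a \<noteq> b" "c \<noteq> d" using h unfolding adjacent_def by auto
    thus "\<phi> a \<inter> \<phi> b = \<phi> c \<inter> \<phi> d" using key[OF h(1,2) _ x] key[OF h(3,4) _ x2] by simp
  qed
  have P3: "\<forall>a\<in>L. \<forall>b\<in>L. \<forall>x. adjacent a b \<longrightarrow> a \<inter> b = {x} \<longrightarrow> \<phi> a \<inter> \<phi> b = {\<kappa> x}"
  proof (intro ballI allI impI)
    fix a b x assume h: "a \<in> L" "b \<in> L" "adjacent a b" "a \<inter> b = {x}"
    have "a \<noteq> b" using h unfolding adjacent_def by auto
    moreover have "x \<in> a" "x \<in> b" using h(4) by blast+
    ultimately show "\<phi> a \<inter> \<phi> b = {\<kappa> x}" using key[OF h(1,2)] by blast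
  qed
  have injk: "inj_on \<kappa> P"
  proof (rule inj_onI)
    fix x y assume xy: "x \<in> P" "y \<in> P" "\<kappa> x = \<kappa> y"
    have "\<phi> ` star L x = \<phi> ` star L y" using kap[OF xy(1)] kap[OF xy(2)] xy(3) by simp
    moreover have sx: "star L x \<subseteq> L" unfolding star_def by auto
    moreover have sy: "star L y \<subseteq> L" unfolding star_def by auto
    ultimately have st: "star L x = star L y" using inj_on_image_eq_iff[OF inj sx sy] by simp
    show "x = y"
    proof (rule ccontr)
      assume nxy: "x \<noteq> y"
      obtain l1' l2' where l': "l1' \<in> L'" "l2' \<in> L'" "l1' \<noteq> l2'" "\<kappa> x \<in> l1'" "\<kappa> x \<in> l2'"
        using Y.two_lines[OF dim kap[OF xy(1), THEN conjunct1]] by blast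
      have "l1' \<in> \<phi> ` star L x" "l2' \<in> \<phi> ` star L x"
        using l' kap[OF xy(1)] unfolding star_def by auto
      then obtain l1 l2 where l: "l1 \<in> star L x" "l2 \<in> star L x" "l1' = \<phi> l1" "l2' = \<phi> l2" by blast
      have "l1 \<noteq> l2" using l l' by blast
      moreover have ll: "l1 \<in> L" "l2 \<in> L" "x \<in> l1" "x \<in> l2" "y \<in> l1" "y \<in> l2"
        using l st unfolding star_def by auto
      have "l1 = l2" using X.line_uniq[OF ll(1,2) nxy ll(3,5,4,6)] .
      thus False using \<open>l1 \<noteq> l2\<close> by simp
    qed
  qed
  have imk: "\<kappa> ` P = P'"
  proof
    show "\<kappa> ` P \<subseteq> P'" by (rule image_subsetI, rule kap[THEN conjunct1])
    show "P' \<subseteq> \<kappa> ` P"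
    proof
      fix x' assume x': "x' \<in> P'"
      obtain a' b' where l': "a' \<in> L'" "b' \<in> L'" "a' \<noteq> b'" "x' \<in> a'" "x' \<in> b'"
        using Y.two_lines[OF dim x'] by blast
      have "a' \<in> \<phi> ` L" "b' \<in> \<phi> ` L" using l' img by simp_all
      then obtain a b where ab: "a \<in> L" "b \<in> L" "a' = \<phi> a" "b' = \<phi> b" by blast
      have "a \<noteq> b" using ab l' by auto
      have "related a' b'" using l' unfolding related_def by blast
      then have "related a b" using isoI ab by simp
      then obtain x where x: "x \<in> a" "x \<in> b" unfolding related_def by blast
      have "\<phi> a \<inter> \<phi> b = {\<kappa> x}" using key[OF ab(1,2) \<open>a \<noteq> b\<close> x] .
      moreover have "x' \<in> \<phi> a \<inter> \<phi> b" using l' ab by simp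
      ultimately have "x' = \<kappa> x" by simp
      moreover have "x \<in> P" using x ab X.line_sub by blast
      ultimately show "x' \<in> \<kappa> ` P" by blast
    qed
  qed
  have col1: "\<forall>x\<in>P. \<forall>y\<in>P. \<forall>z\<in>P. collinear L x y z \<longrightarrow> collinear L' (\<kappa> x) (\<kappa> y) (\<kappa> z)"
  proof (intro ballI impI)
    fix x y z assume h: "x \<in> P" "y \<in> P" "z \<in> P" "collinear L x y z"
    then obtain l where l: "l \<in> L" "x \<in> l" "y \<in> l" "z \<in> l" unfolding collinear_def by blast
    have "\<kappa> x \<in> \<phi> l" "\<kappa> y \<in> \<phi> l" "\<kappa> z \<in> \<phi> l" using kin h l by auto
    moreover have "\<phi> l \<in> L'" using l img by blast
    ultimately show "collinear L' (\<kappa> x) (\<kappa> y) (\<kappa> z)" unfolding collinear_def by blast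
  qed
  have col2: "\<forall>x\<in>P. \<forall>y\<in>P. \<forall>z\<in>P. \<not> collinear L x y z \<longrightarrow> \<not> collinear L' (\<kappa> x) (\<kappa> y) (\<kappa> z)"
  proof (intro ballI impI)
    fix x y z assume h: "x \<in> P" "y \<in> P" "z \<in> P" "\<not> collinear L x y z"
    show "\<not> collinear L' (\<kappa> x) (\<kappa> y) (\<kappa> z)"
    proof
      assume "collinear L' (\<kappa> x) (\<kappa> y) (\<kappa> z)"
      then obtain l' where l': "l' \<in> L'" "\<kappa> x \<in> l'" "\<kappa> y \<in> l'" "\<kappa> z \<in> l'"
        unfolding collinear_def by blast
      have "l' \<in> \<phi> ` star L x" using kap[OF h(1)] l' unfolding star_def by auto
      then obtain lx where lx: "lx \<in> L" "x \<in> lx" "l' = \<phi> lx" unfolding star_def by auto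
      have "l' \<in> \<phi> ` star L y" using kap[OF h(2)] l' unfolding star_def by auto
      then obtain ly where ly: "ly \<in> L" "y \<in> ly" "l' = \<phi> ly" unfolding star_def by auto
      have "l' \<in> \<phi> ` star L z" using kap[OF h(3)] l' unfolding star_def by auto
      then obtain lz where lz: "lz \<in> L" "z \<in> lz" "l' = \<phi> lz" unfolding star_def by auto
      have "ly = lx" using inj_onD[OF inj _ ly(1) lx(1)] lx(3) ly(3) by simp
      moreover have "lz = lx" using inj_onD[OF inj _ lz(1) lx(1)] lx(3) lz(3) by simp
      ultimately have "collinear L x y z" unfolding collinear_def using lx ly lz by blast
      thus False using h by simp
    qed
  qed
  have "collineation P L P' L' \<kappa>"
    unfolding collineation_def bij_betw_def using injk imk col1 col2 by simp
  thus ?thesis using P1 P2 P3 by blast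
qed


end
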